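(* Let $F$ be a field of characteristic zero and let $A=A_0\oplus A_1$ be a unitary superalgebra over $F$ such that $A\cong F\dotplus J(A)$ (with $F$ identified with $F\cdot 1$ and $J(A)$ the Jacobson radical of $A$) and $A_0\not\subseteq Z(A)$. Then $Z(A)\cong F\dotplus J'$, where $J'=J(A)\cap Z(A)$. Moreover, if $J'$ is a graded ideal of $A$, then $C^{gr}(A)$ is a $T_2$-ideal of $F\langle Y,Z\rangle$.
   Context: A superalgebra is an associative algebra $A=A_0\oplus A_1$ with $A_iA_j\subseteq A_{i+j \bmod 2}$; $Z(A)$ is the center of $A$. An ideal $I$ is graded if $I=(I\cap A_0)\oplus(I\cap A_1)$. $F\langle Y,Z\rangle$ is the free associative algebra over $F$ on disjoint countable sets $Y=\{y_1,y_2,\dots\}$ (even variables) and $Z=\{z_1,z_2,\dots\}$ (odd variables), graded by the parity of the degree in the $Z$-variables. A polynomial $f(y_1,\dots,y_r,z_1,\dots,z_s)$ is a central graded polynomial of $A$ if it has zero constant term and $f(a_1,\dots,a_r,b_1,\dots,b_s)\in Z(A)$ for all $a_i\in A_0$, $b_j\in A_1$; $C^{gr}(A)$ is the set of all such polynomials. A $T_2$-ideal is an ideal of $F\langle Y,Z\rangle$ invariant under all grading-preserving endomorphisms of $F\langle Y,Z\rangle$. *)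

theory Defs
  imports Main
begin

text \<open>A unitary associative algebra over the field 'k is modelled as a type 'a of class
ring_1 (associative, unital) together with a scalar multiplication sc.\<close>

definition unital_algebra :: "('k::field \<Rightarrow> 'a::ring_1 \<Rightarrow> 'a) \<Rightarrow> bool" where
  "unital_algebra sc \<longleftrightarrow>
     (\<forall>c x y. sc c (x + y) = sc c x + sc c y) \<and>
     (\<forall>c d x. sc (c + d) x = sc c x + sc d x) \<and>
     (\<forall>c d x. sc (c * d) x = sc c (sc d x)) \<and>
     (\<forall>x. sc 1 x = x) \<and>
     (\<forall>c x y. sc c (x * y) = sc c x * y) \<and>
     (\<forall>c x y. sc c (x * y) = x * sc c y)"

definition subspace_of :: "('k::field \<Rightarrow> 'a::ring_1 \<Rightarrow> 'a) \<Rightarrow> 'a set \<Rightarrow> bool" where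
  "subspace_of sc V \<longleftrightarrow> 0 \<in> V \<and> (\<forall>x\<in>V. \<forall>y\<in>V. x + y \<in> V) \<and> (\<forall>c. \<forall>x\<in>V. sc c x \<in> V)"

definition superalgebra ::
  "('k::field \<Rightarrow> 'a::ring_1 \<Rightarrow> 'a) \<Rightarrow> 'a set \<Rightarrow> 'a set \<Rightarrow> bool" where
  "superalgebra sc A0 A1 \<longleftrightarrow>
     unital_algebra sc \<and> subspace_of sc A0 \<and> subspace_of sc A1 \<and>
     (\<forall>x. \<exists>!p. fst p \<in> A0 \<and> snd p \<in> A1 \<and> x = fst p + snd p) \<and>
     (\<forall>x\<in>A0. \<forall>y\<in>A0. x * y \<in> A0) \<and>
     (\<forall>x\<in>A0. \<forall>y\<in>A1. x * y \<in> A1) \<and>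
     (\<forall>x\<in>A1. \<forall>y\<in>A0. x * y \<in> A1) \<and>
     (\<forall>x\<in>A1. \<forall>y\<in>A1. x * y \<in> A0)"

definition alg_center :: "'a::ring_1 set" where
  "alg_center = {z. \<forall>x. z * x = x * z}"

definition jacobson :: "'a::ring_1 set" where
  "jacobson = {x. \<forall>a. \<exists>b. b * (1 - a * x) = 1}"

definition alg_ideal :: "('k::field \<Rightarrow> 'a::ring_1 \<Rightarrow> 'a) \<Rightarrow> 'a set \<Rightarrow> bool" where
  "alg_ideal sc I \<longleftrightarrow> subspace_of sc I \<and> (\<forall>x\<in>I. \<forall>a. a * x \<in> I \<and> x * a \<in> I)"

definition graded_ideal ::
  "('k::field \<Rightarrow> 'a::ring_1 \<Rightarrow> 'a) \<Rightarrow> 'a set \<Rightarrow> 'a set \<Rightarrow> 'a set \<Rightarrow> bool" where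
  "graded_ideal sc A0 A1 I \<longleftrightarrow> alg_ideal sc I \<and>
     (\<forall>x\<in>I. \<exists>x0 x1. x0 \<in> I \<inter> A0 \<and> x1 \<in> I \<inter> A1 \<and> x = x0 + x1)"

text \<open>Variables: Inl i is y_i (even), Inr j is z_j (odd). Monomials are words (lists of
variables); polynomials are finitely supported coefficient functions on words.\<close>

type_synonym var = "nat + nat"

definition fpoly :: "(var list \<Rightarrow> 'k::zero) set" where
  "fpoly = {f. finite {w. f w \<noteq> 0}}"

definition fmult :: "(var list \<Rightarrow> 'k::comm_ring_1) \<Rightarrow> (var list \<Rightarrow> 'k) \<Rightarrow> var list \<Rightarrow> 'k" where
  "fmult f g = (\<lambda>w. \<Sum>i\<le>length w. f (take i w) * g (drop i w))"

definition zdeg :: "var list \<Rightarrow> nat" where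
  "zdeg w = length (filter (\<lambda>v. case v of Inl _ \<Rightarrow> False | Inr _ \<Rightarrow> True) w)"

definition fpoly_even :: "(var list \<Rightarrow> 'k::zero) set" where
  "fpoly_even = {f \<in> fpoly. \<forall>w. f w \<noteq> 0 \<longrightarrow> even (zdeg w)}"

definition fpoly_odd :: "(var list \<Rightarrow> 'k::zero) set" where
  "fpoly_odd = {f \<in> fpoly. \<forall>w. f w \<noteq> 0 \<longrightarrow> odd (zdeg w)}"

definition fpoly_ideal :: "(var list \<Rightarrow> 'k::field) set \<Rightarrow> bool" where
  "fpoly_ideal I \<longleftrightarrow> I \<subseteq> fpoly \<and> (\<lambda>_. 0) \<in> I \<and>
     (\<forall>f\<in>I. \<forall>g\<in>I. (\<lambda>w. f w + g w) \<in> I) \<and>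
     (\<forall>c. \<forall>f\<in>I. (\<lambda>w. c * f w) \<in> I) \<and>
     (\<forall>f\<in>I. \<forall>g\<in>fpoly. fmult g f \<in> I \<and> fmult f g \<in> I)"

definition graded_endo :: "((var list \<Rightarrow> 'k::field) \<Rightarrow> (var list \<Rightarrow> 'k)) \<Rightarrow> bool" where
  "graded_endo \<phi> \<longleftrightarrow>
     (\<forall>f\<in>fpoly. \<phi> f \<in> fpoly) \<and>
     (\<forall>f\<in>fpoly. \<forall>g\<in>fpoly. \<phi> (\<lambda>w. f w + g w) = (\<lambda>w. \<phi> f w + \<phi> g w)) \<and>
     (\<forall>c. \<forall>f\<in>fpoly. \<phi> (\<lambda>w. c * f w) = (\<lambda>w. c * \<phi> f w)) \<and>
     (\<forall>f\<in>fpoly. \<forall>g\<in>fpoly. \<phi> (fmult f g) = fmult (\<phi> f) (\<phi> g)) \<and>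
     \<phi> ` fpoly_even \<subseteq> fpoly_even \<and> \<phi> ` fpoly_odd \<subseteq> fpoly_odd"

definition T2_ideal :: "(var list \<Rightarrow> 'k::field) set \<Rightarrow> bool" where
  "T2_ideal I \<longleftrightarrow> fpoly_ideal I \<and> (\<forall>\<phi>. graded_endo \<phi> \<longrightarrow> \<phi> ` I \<subseteq> I)"

definition peval ::
  "('k::field \<Rightarrow> 'a::ring_1 \<Rightarrow> 'a) \<Rightarrow> (var \<Rightarrow> 'a) \<Rightarrow> (var list \<Rightarrow> 'k) \<Rightarrow> 'a" where
  "peval sc \<rho> f = (\<Sum>w\<in>{w. f w \<noteq> 0}. sc (f w) (prod_list (map \<rho> w)))"

definition Cgr :: "('k::field \<Rightarrow> 'a::ring_1 \<Rightarrow> 'a) \<Rightarrow> 'a set \<Rightarrow> 'a set \<Rightarrow> (var list \<Rightarrow> 'k) set" where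
  "Cgr sc A0 A1 = {f \<in> fpoly. f [] = 0 \<and>
     (\<forall>\<rho>. (\<forall>i. \<rho> (Inl i) \<in> A0) \<and> (\<forall>j. \<rho> (Inr j) \<in> A1) \<longrightarrow> peval sc \<rho> f \<in> alg_center)}"

end

theory Submission
  imports Defs "HOL-Computational_Algebra.Polynomial"
begin

locale salg =
  fixes sc :: "'k::field_char_0 \<Rightarrow> 'a::ring_1 \<Rightarrow> 'a"
    and A0 A1 :: "'a set"
  assumes super: "superalgebra sc A0 A1"
    and decomp: "\<forall>a. \<exists>!c. a - sc c 1 \<in> jacobson"
begin

lemma ua: "unital_algebra sc" using super unfolding superalgebra_def by blast

lemma sc_add: "sc c (x + y) = sc c x + sc c y" using ua unfolding unital_algebra_def by blast
lemma sc_addc: "sc (c + d) x = sc c x + sc d x" using ua unfolding unital_algebra_def by blast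
lemma sc_mult: "sc (c * d) x = sc c (sc d x)" using ua unfolding unital_algebra_def by blast
lemma sc_one[simp]: "sc 1 x = x" using ua unfolding unital_algebra_def by blast
lemma sc_ml: "sc c (x * y) = sc c x * y" using ua unfolding unital_algebra_def by blast
lemma sc_mr: "sc c (x * y) = x * sc c y" using ua unfolding unital_algebra_def by blast

lemma sc_l1: "sc c x = sc c 1 * x" using sc_ml[of c 1 x] by simp
lemma sc_r1: "sc c x = x * sc c 1" using sc_mr[of c x 1] by simp
lemma sc_comm: "sc c 1 * x = x * sc c 1" using sc_l1 sc_r1 by metis
lemma sc_zero[simp]: "sc c 0 = 0" using sc_add[of c 0 0] by simp
lemma sc_zeroc[simp]: "sc 0 x = 0" using sc_addc[of 0 0 x] by simp
lemma sc_neg: "sc c (- x) = - sc c x"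
proof -
  have "sc c x + sc c (- x) = 0" using sc_add[of c x "-x"] by simp
  then show ?thesis by (simp add: minus_unique)
qed
lemma sc_negc: "sc (- c) x = - sc c x"
proof -
  have "sc c x + sc (- c) x = 0" using sc_addc[of c "-c" x] by simp
  then show ?thesis by (simp add: minus_unique)
qed
lemma sc_diff: "sc c (x - y) = sc c x - sc c y"
  using sc_add[of c x "-y"] sc_neg by simp
lemma sc_diffc: "sc (c - d) x = sc c x - sc d x"
  using sc_addc[of c "-d" x] sc_negc by simp
lemma sc_sum: "sc c (\<Sum>i\<in>S. f i) = (\<Sum>i\<in>S. sc c (f i))"
  by (induction S rule: infinite_finite_induct) (auto simp: sc_add)
lemma sc_sumc: "sc (\<Sum>i\<in>S. f i) x = (\<Sum>i\<in>S. sc (f i) x)"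
  by (induction S rule: infinite_finite_induct) (auto simp: sc_addc)
lemma sc_times: "sc c x * sc d y = sc (c * d) (x * y)"
proof -
  have "sc c x * sc d y = sc c (x * sc d y)" by (simp add: sc_ml)
  also have "\<dots> = sc c (sc d (x * y))" by (simp add: sc_mr)
  finally show ?thesis by (simp add: sc_mult)
qed

lemma sc1_center: "sc c 1 \<in> alg_center"
  unfolding alg_center_def using sc_comm by blast

lemma center_sc: "z \<in> alg_center \<Longrightarrow> sc c z \<in> alg_center"
  unfolding alg_center_def
proof (safe)
  fix x assume "\<forall>x. z * x = x * z"
  then have "sc c (z * x) = sc c (x * z)" by simp
  then show "sc c z * x = x * sc c z" by (simp add: sc_ml[symmetric] sc_mr[symmetric])
qed
lemma center_add: "(z::'a) \<in> alg_center \<Longrightarrow> w \<in> alg_center \<Longrightarrow> z + w \<in> alg_center"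
  unfolding alg_center_def by (simp add: distrib_left distrib_right)
lemma center_diff: "(z::'a) \<in> alg_center \<Longrightarrow> w \<in> alg_center \<Longrightarrow> z - w \<in> alg_center"
  unfolding alg_center_def by (simp add: left_diff_distrib right_diff_distrib)
lemma center_0: "(0::'a) \<in> alg_center" unfolding alg_center_def by simp

section \<open>Jacobson\<close>

lemma J_inv: assumes "x \<in> jacobson" shows "\<exists>u. u * (1 - a * x) = 1 \<and> (1 - a * x) * u = 1"
proof -
  obtain u where u: "u * (1 - a * x) = 1" using assms unfolding jacobson_def by blast
  obtain v where v: "v * (1 - (- (u * a)) * x) = 1" using assms unfolding jacobson_def by blast
  have "u - u * a * x = 1" using u by (simp add: right_diff_distrib mult.assoc)
  then have "u = 1 + u * a * x" by (simp add: algebra_simps)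
  then have "1 - (- (u * a)) * x = u" by simp
  then have vu: "v * u = 1" using v by simp
  have "v = v * (u * (1 - a * x))" using u by simp
  also have "\<dots> = 1 - a * x" by (simp add: mult.assoc[symmetric] vu)
  finally have "v = 1 - a * x" .
  then show ?thesis using u vu by blast
qed

lemma J_add: assumes "x \<in> jacobson" "y \<in> jacobson" shows "x + y \<in> jacobson"
  unfolding jacobson_def mem_Collect_eq
proof
  fix a
  obtain u where u: "u * (1 - a * x) = 1" "(1 - a * x) * u = 1" using J_inv[OF assms(1)] by blast
  obtain w where w: "w * (1 - (u * a) * y) = 1" using assms(2) unfolding jacobson_def by blast
  have e: "1 - a * (x + y) = (1 - a * x) * (1 - u * a * y)"
  proof -
    have "(1 - a * x) * (1 - u * a * y) = (1 - a * x) - ((1 - a * x) * u) * a * y"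
      by (simp add: algebra_simps)
    also have "\<dots> = (1 - a * x) - 1 * a * y" by (simp only: u(2))
    also have "\<dots> = 1 - a * (x + y)" by (simp add: algebra_simps)
    finally show ?thesis by simp
  qed
  have "(w * u) * (1 - a * (x + y)) = w * ((u * (1 - a * x)) * (1 - u * a * y))"
    unfolding e by (simp add: mult.assoc)
  also have "\<dots> = 1" by (simp only: u(1) mult_1_left w)
  finally show "\<exists>b. b * (1 - a * (x + y)) = 1" by blast
qed

lemma J_lmult: assumes "x \<in> jacobson" shows "s * x \<in> jacobson"
  unfolding jacobson_def mem_Collect_eq
proof
  fix a
  obtain b where "b * (1 - (a * s) * x) = 1" using assms unfolding jacobson_def by blast
  then show "\<exists>b. b * (1 - a * (s * x)) = 1" by (auto simp: mult.assoc)
qed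

lemma J_rmult: assumes "x \<in> jacobson" shows "x * s \<in> jacobson"
  unfolding jacobson_def mem_Collect_eq
proof
  fix a
  obtain u where u: "u * (1 - (s * a) * x) = 1" "(1 - (s * a) * x) * u = 1" using J_inv[OF assms] by blast
  have "(1 + a * x * u * s) * (1 - a * (x * s)) = 1 - a * x * s + a * x * ((u * (1 - s * a * x))) * s"
    by (simp add: algebra_simps)
  also have "\<dots> = 1" by (simp only: u(1) mult_1_right) simp
  finally show "\<exists>b. b * (1 - a * (x * s)) = 1" by blast
qed

lemma J_0: "0 \<in> jacobson" unfolding jacobson_def by simp
lemma J_neg: "x \<in> jacobson \<Longrightarrow> - x \<in> jacobson" using J_lmult[of x "-1"] by simp
lemma J_diff: "x \<in> jacobson \<Longrightarrow> y \<in> jacobson \<Longrightarrow> x - y \<in> jacobson"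
  using J_add[OF _ J_neg, of x y] by simp
lemma J_sc: "x \<in> jacobson \<Longrightarrow> sc c x \<in> jacobson" by (subst sc_l1) (rule J_lmult)
lemma J_sum: "(\<And>i. i \<in> S \<Longrightarrow> f i \<in> jacobson) \<Longrightarrow> (\<Sum>i\<in>S. f i) \<in> jacobson"
  by (induction S rule: infinite_finite_induct) (auto simp: J_0 J_add)

lemma sc1_J: "sc c 1 \<in> jacobson \<Longrightarrow> sc c 1 = 0"
proof (cases "c = 0")
  case False
  assume "sc c 1 \<in> jacobson"
  then obtain b where "b * (1 - sc (1/c) 1 * sc c 1) = 1" unfolding jacobson_def by blast
  then have "(1::'a) = 0" using False by (simp add: sc_times)
  then have "sc c (1::'a) = sc c 1 * 0" by (metis mult_1_right)
  then show ?thesis by simp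
qed simp

section \<open>Grading\<close>

lemma sub0: "subspace_of sc A0" and sub1: "subspace_of sc A1"
  using super unfolding superalgebra_def by blast+

lemma A0_0: "0 \<in> A0" and A0_add: "x \<in> A0 \<Longrightarrow> y \<in> A0 \<Longrightarrow> x + y \<in> A0"
  and A0_sc: "x \<in> A0 \<Longrightarrow> sc c x \<in> A0"
  using sub0 unfolding subspace_of_def by blast+
lemma A1_0: "0 \<in> A1" and A1_add: "x \<in> A1 \<Longrightarrow> y \<in> A1 \<Longrightarrow> x + y \<in> A1"
  and A1_sc: "x \<in> A1 \<Longrightarrow> sc c x \<in> A1"
  using sub1 unfolding subspace_of_def by blast+
lemma A0_neg: "x \<in> A0 \<Longrightarrow> - x \<in> A0" using A0_sc[of x "-1"] by (simp add: sc_negc)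
lemma A1_neg: "x \<in> A1 \<Longrightarrow> - x \<in> A1" using A1_sc[of x "-1"] by (simp add: sc_negc)
lemma A0_diff: "x \<in> A0 \<Longrightarrow> y \<in> A0 \<Longrightarrow> x - y \<in> A0" using A0_add[OF _ A0_neg, of x y] by simp
lemma A1_diff: "x \<in> A1 \<Longrightarrow> y \<in> A1 \<Longrightarrow> x - y \<in> A1" using A1_add[OF _ A1_neg, of x y] by simp

lemma M00: "x \<in> A0 \<Longrightarrow> y \<in> A0 \<Longrightarrow> x * y \<in> A0"
  and M01: "x \<in> A0 \<Longrightarrow> y \<in> A1 \<Longrightarrow> x * y \<in> A1"
  and M10: "x \<in> A1 \<Longrightarrow> y \<in> A0 \<Longrightarrow> x * y \<in> A1"
  and M11: "x \<in> A1 \<Longrightarrow> y \<in> A1 \<Longrightarrow> x * y \<in> A0"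
  using super unfolding superalgebra_def by blast+

lemma dec: "\<exists>!p. fst p \<in> A0 \<and> snd p \<in> A1 \<and> x = fst p + snd p"
  using super unfolding superalgebra_def by blast

definition "p0 x = fst (THE p. fst p \<in> A0 \<and> snd p \<in> A1 \<and> x = fst p + snd p)"
definition "p1 x = snd (THE p. fst p \<in> A0 \<and> snd p \<in> A1 \<and> x = fst p + snd p)"

lemma proj: "p0 x \<in> A0 \<and> p1 x \<in> A1 \<and> x = p0 x + p1 x"
  using theI'[OF dec[of x]] unfolding p0_def p1_def by blast

lemma proj_uniq: assumes "a \<in> A0" "b \<in> A1" "x = a + b" shows "p0 x = a" "p1 x = b"
proof -
  have "(THE p. fst p \<in> A0 \<and> snd p \<in> A1 \<and> x = fst p + snd p) = (a, b)"
    using assms by (intro the1_equality[OF dec]) auto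
  then show "p0 x = a" "p1 x = b" unfolding p0_def p1_def by auto
qed

lemma A01: assumes "x \<in> A0" "x \<in> A1" shows "x = 0"
proof -
  have "p0 x = x" using proj_uniq(1)[of x 0 x] assms A1_0 by simp
  moreover have "p0 x = 0" using proj_uniq(1)[of 0 x x] assms A0_0 by simp
  ultimately show ?thesis by simp
qed

lemma one_A0: "1 \<in> A0"
proof -
  define e0 where "e0 = p0 1"
  define e1 where "e1 = p1 1"
  have e0: "e0 \<in> A0" and e1: "e1 \<in> A1" and e: "1 = e0 + e1" using proj[of 1] unfolding e0_def e1_def by auto
  have "(e0 + e1) * e1 = e0 * e1 + e1 * e1" by (simp add: distrib_right)
  then have "e1 = e0 * e1 + e1 * e1" by (simp add: e[symmetric])
  then have "e1 = e1 * e1 + e0 * e1" by (simp add: add.commute)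
  then have a: "e1 = e0 * e1" using proj_uniq(2)[of 0 e1 e1] proj_uniq(2)[of "e1 * e1" "e0 * e1" e1]
      M11[OF e1 e1] M01[OF e0 e1] A0_0 e1 by simp
  have "e0 * (e0 + e1) = e0 * e0 + e0 * e1" by (simp add: distrib_left)
  then have "e0 = e0 * e0 + e0 * e1" by (simp add: e[symmetric])
  then have "0 = e0 * e1" using proj_uniq(2)[of e0 0 e0] proj_uniq(2)[of "e0 * e0" "e0 * e1" e0]
      M00[OF e0 e0] M01[OF e0 e1] A1_0 e0 by simp
  then have "e1 = 0" using a by simp
  then show ?thesis using e e0 by simp
qed

lemma sc1_A0: "sc c 1 \<in> A0" using A0_sc[OF one_A0] .

definition "sig x = p0 x - p1 x"

lemma sig_eq: "a \<in> A0 \<Longrightarrow> b \<in> A1 \<Longrightarrow> sig (a + b) = a - b"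
  unfolding sig_def using proj_uniq by simp

lemma sig_A0: "a \<in> A0 \<Longrightarrow> sig a = a" using sig_eq[of a 0] A1_0 by simp
lemma sig_A1: "b \<in> A1 \<Longrightarrow> sig b = - b" using sig_eq[of 0 b] A0_0 by simp

lemma sig_add: "sig (x + y) = sig x + sig y"
proof -
  have "x + y = (p0 x + p0 y) + (p1 x + p1 y)"
    using proj[of x] proj[of y] by (simp add: algebra_simps)
  then have "sig (x + y) = (p0 x + p0 y) - (p1 x + p1 y)"
    using sig_eq[OF A0_add A1_add] proj by simp
  then show ?thesis unfolding sig_def[of x] sig_def[of y] by (simp add: algebra_simps)
qed

lemma sig_neg: "sig (- x) = - sig x"
  using sig_add[of x "-x"] sig_A0[OF A0_0] by (simp add: minus_unique eq_neg_iff_add_eq_0)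

lemma sig_diff: "sig (x - y) = sig x - sig y"
  using sig_add[of x "-y"] sig_neg[of y] by simp

lemma sig_mult: "sig (x * y) = sig x * sig y"
proof -
  define x0 x1 y0 y1 where "x0 = p0 x" "x1 = p1 x" "y0 = p0 y" "y1 = p1 y"
  have h: "x0 \<in> A0" "x1 \<in> A1" "y0 \<in> A0" "y1 \<in> A1" "x = x0 + x1" "y = y0 + y1"
    using proj[of x] proj[of y] unfolding x0_x1_y0_y1_def by auto
  have "x * y = (x0 * y0 + x1 * y1) + (x0 * y1 + x1 * y0)" using h(5,6) by (simp add: algebra_simps)
  then have "sig (x * y) = (x0 * y0 + x1 * y1) - (x0 * y1 + x1 * y0)"
    using sig_eq A0_add A1_add M00 M01 M10 M11 h(1-4) by simp
  moreover have "sig x = x0 - x1" "sig y = y0 - y1" using sig_eq h by auto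
  moreover have "(x0 - x1) * (y0 - y1) = (x0 * y0 + x1 * y1) - (x0 * y1 + x1 * y0)"
    by (simp add: algebra_simps)
  ultimately show ?thesis by simp
qed

lemma sig_sig: "sig (sig x) = x"
proof -
  have "sig x = p0 x + (- p1 x)" unfolding sig_def by simp
  then have "sig (sig x) = p0 x - (- p1 x)" using sig_eq[OF _ A1_neg] proj by simp
  then show ?thesis using proj[of x] by simp
qed

lemma sig_J: assumes "x \<in> jacobson" shows "sig x \<in> jacobson"
  unfolding jacobson_def mem_Collect_eq
proof
  fix a
  obtain b where "b * (1 - sig a * x) = 1" using assms unfolding jacobson_def by blast
  then have "sig (b * (1 - sig a * x)) = 1" using sig_A0[OF one_A0] by simp
  then have "sig b * (1 - a * sig x) = 1" by (simp add: sig_mult sig_diff sig_A0[OF one_A0] sig_sig)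
  then show "\<exists>b. b * (1 - a * sig x) = 1" by blast
qed

section \<open>Scalar part\<close>

definition "spt x = (THE c. x - sc c 1 \<in> jacobson)"

lemma spt_spec: "x - sc (spt x) 1 \<in> jacobson"
  unfolding spt_def using theI'[of "\<lambda>c. x - sc c 1 \<in> jacobson"] decomp by blast

lemma spt_uniq: "x - sc c 1 \<in> jacobson \<Longrightarrow> spt x = c"
  unfolding spt_def using decomp by (intro the1_equality) auto

lemma spt_sc1[simp]: "spt (sc c 1) = c" by (rule spt_uniq) (simp add: J_0)
lemma spt_one[simp]: "spt 1 = 1" using spt_sc1[of 1] by simp
lemma spt_zero[simp]: "spt 0 = 0" using spt_sc1[of 0] by simp

lemma spt_add: "spt (x + y) = spt x + spt y"
proof (rule spt_uniq)
  have "(x + y) - sc (spt x + spt y) 1 = (x - sc (spt x) 1) + (y - sc (spt y) 1)"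
    by (simp add: sc_addc algebra_simps)
  then show "(x + y) - sc (spt x + spt y) 1 \<in> jacobson" using J_add[OF spt_spec spt_spec, of x y] by (simp only:)
qed

lemma spt_sc: "spt (sc c x) = c * spt x"
proof (rule spt_uniq)
  have "sc c x - sc (c * spt x) 1 = sc c (x - sc (spt x) 1)" by (simp add: sc_diff sc_mult)
  then show "sc c x - sc (c * spt x) 1 \<in> jacobson" using J_sc spt_spec by simp
qed

lemma spt_mult: "spt (x * y) = spt x * spt y"
proof (rule spt_uniq)
  define jx jy where "jx = x - sc (spt x) 1" "jy = y - sc (spt y) 1"
  have j: "jx \<in> jacobson" "jy \<in> jacobson" using spt_spec unfolding jx_jy_def by auto
  have "x * y = (jx + sc (spt x) 1) * (jy + sc (spt y) 1)" unfolding jx_jy_def by simp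
  also have "\<dots> = jx * jy + jx * sc (spt y) 1 + sc (spt x) 1 * jy + sc (spt x) 1 * sc (spt y) 1"
    by (simp add: algebra_simps)
  finally have "x * y - sc (spt x * spt y) 1 = jx * jy + jx * sc (spt y) 1 + sc (spt x) 1 * jy"
    by (simp add: sc_times)
  then show "x * y - sc (spt x * spt y) 1 \<in> jacobson" by (simp only:) (intro J_add J_lmult J_rmult j)
qed

lemma spt_sum: "spt (\<Sum>i\<in>S. f i) = (\<Sum>i\<in>S. spt (f i))"
  by (induction S rule: infinite_finite_induct) (auto simp: spt_add)

lemma spt_prod_list: "spt (prod_list (map f w)) = prod_list (map (\<lambda>v. spt (f v)) w)"
  by (induction w) (auto simp: spt_mult)

lemma A1_J: assumes "a \<in> A1" shows "a \<in> jacobson"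
proof -
  define c where "c = spt a"
  have h: "a - sc c 1 \<in> jacobson" using spt_spec unfolding c_def .
  have "sig (a - sc c 1) = - a - sc c 1" using sig_A1[OF assms] sig_A0[OF sc1_A0] by (simp add: sig_diff)
  then have "- a - sc c 1 \<in> jacobson" using sig_J[OF h] by simp
  then have 1: "spt (- a) = c" by (rule spt_uniq)
  have "- a - sc (- c) 1 = - (a - sc c 1)" by (simp add: sc_negc)
  then have "- a - sc (- c) 1 \<in> jacobson" using J_neg[OF h] by (simp only:)
  then have "spt (- a) = - c" by (rule spt_uniq)
  then have "c = 0" using 1 by simp
  then show ?thesis using h by simp
qed

lemma spt_A1: "a \<in> A1 \<Longrightarrow> spt a = 0"
  using A1_J spt_uniq[of a 0] by simp

section \<open>Polynomials and evaluation\<close>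

abbreviation "supp (f :: var list \<Rightarrow> 'k) \<equiv> {w. f w \<noteq> 0}"
abbreviation "mon \<rho> w \<equiv> prod_list (map \<rho> w)"

lemma peval_sup: assumes "finite S" "supp f \<subseteq> S"
  shows "peval sc \<rho> f = (\<Sum>w\<in>S. sc (f w) (mon \<rho> w))"
  unfolding peval_def by (rule sum.mono_neutral_left) (use assms in auto)

lemma fpoly_fin: "f \<in> fpoly \<Longrightarrow> finite (supp f)" for f :: "var list \<Rightarrow> 'k" unfolding fpoly_def by simp

lemma fpoly_add: "f \<in> fpoly \<Longrightarrow> g \<in> fpoly \<Longrightarrow> (\<lambda>w. f w + g w) \<in> fpoly"
  for f g :: "var list \<Rightarrow> 'k"
proof -
  assume "f \<in> fpoly" "g \<in> fpoly"
  then have "finite (supp f \<union> supp g)" unfolding fpoly_def by simp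
  then show ?thesis unfolding fpoly_def mem_Collect_eq by (rule finite_subset[rotated]) auto
qed

lemma fpoly_sc: "f \<in> fpoly \<Longrightarrow> (\<lambda>w. c * f w) \<in> fpoly" for f :: "var list \<Rightarrow> 'k"
proof -
  assume "f \<in> fpoly"
  then have "finite (supp f)" unfolding fpoly_def by simp
  then show ?thesis unfolding fpoly_def mem_Collect_eq by (rule finite_subset[rotated]) auto
qed

lemma fpoly_zero: "(\<lambda>w. 0) \<in> fpoly" unfolding fpoly_def by simp

lemma fmult_supp: "supp (fmult f g) \<subseteq> (\<lambda>(u, v). u @ v) ` (supp f \<times> supp g)"
  for f g :: "var list \<Rightarrow> 'k"
proof
  fix w assume "w \<in> supp (fmult f g)"
  then have "(\<Sum>i\<le>length w. f (take i w) * g (drop i w)) \<noteq> 0" unfolding fmult_def by simp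
  then obtain i where "f (take i w) * g (drop i w) \<noteq> 0"
    by (rule sum.not_neutral_contains_not_neutral)
  then have "(take i w, drop i w) \<in> supp f \<times> supp g" by auto
  then show "w \<in> (\<lambda>(u, v). u @ v) ` (supp f \<times> supp g)" by (intro image_eqI[where x="(take i w, drop i w)"]) auto
qed

lemma fpoly_fmult: fixes f g :: "var list \<Rightarrow> 'k" assumes "f \<in> fpoly" "g \<in> fpoly" shows "fmult f g \<in> fpoly"
proof -
  have "finite ((\<lambda>(u, v). u @ v) ` (supp f \<times> supp g))" using assms fpoly_fin by blast
  then show ?thesis unfolding fpoly_def using fmult_supp finite_subset by blast
qed

lemma fmult_Nil: "fmult f g [] = f [] * g []" unfolding fmult_def by simp

lemma peval_zero: "peval sc \<rho> (\<lambda>w. 0) = 0" unfolding peval_def by simp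

lemma peval_add: assumes "f \<in> fpoly" "g \<in> fpoly"
  shows "peval sc \<rho> (\<lambda>w. f w + g w) = peval sc \<rho> f + peval sc \<rho> g"
proof -
  define S where "S = supp f \<union> supp g"
  have S: "finite S" using assms fpoly_fin unfolding S_def by blast
  have "peval sc \<rho> (\<lambda>w. f w + g w) = (\<Sum>w\<in>S. sc (f w + g w) (mon \<rho> w))"
    by (rule peval_sup[OF S]) (auto simp: S_def)
  also have "\<dots> = (\<Sum>w\<in>S. sc (f w) (mon \<rho> w)) + (\<Sum>w\<in>S. sc (g w) (mon \<rho> w))"
    by (simp add: sc_addc sum.distrib)
  also have "\<dots> = peval sc \<rho> f + peval sc \<rho> g"
    using peval_sup[OF S, of f \<rho>] peval_sup[OF S, of g \<rho>] by (auto simp: S_def)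
  finally show ?thesis .
qed

lemma peval_scal: "peval sc \<rho> (\<lambda>w. c * f w) = sc c (peval sc \<rho> f)"
proof (cases "finite (supp f)")
  case True
  have "peval sc \<rho> (\<lambda>w. c * f w) = (\<Sum>w\<in>supp f. sc (c * f w) (mon \<rho> w))"
    by (rule peval_sup[OF True]) auto
  also have "\<dots> = sc c (peval sc \<rho> f)" unfolding peval_def by (simp add: sc_sum sc_mult)
  finally show ?thesis .
next
  case False
  show ?thesis
  proof (cases "c = 0")
    case True then show ?thesis by (simp add: peval_zero)
  next
    case c: False
    then have "supp (\<lambda>w. c * f w) = supp f" by auto
    then show ?thesis using False unfolding peval_def by simp
  qed
qed

lemma peval_fmult: assumes f: "f \<in> fpoly" and g: "g \<in> fpoly"
  shows "peval sc \<rho> (fmult f g) = peval sc \<rho> f * peval sc \<rho> g"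
proof -
  define Sf Sg where "Sf = supp f" "Sg = supp g"
  have fin: "finite Sf" "finite Sg" using f g fpoly_fin unfolding Sf_Sg_def by auto
  define W where "W = (\<lambda>(u, v). u @ v) ` (Sf \<times> Sg)"
  have W: "finite W" using fin unfolding W_def by simp
  define h where "h = (\<lambda>(u::var list, v::var list). (u @ v, length u))"
  define F where "F = (\<lambda>(w, i). sc (f (take i w) * g (drop i w)) (mon \<rho> w))"
  define Sig where "Sig = Sigma W (\<lambda>w. {..length w})"
  have "peval sc \<rho> (fmult f g) = (\<Sum>w\<in>W. sc (fmult f g w) (mon \<rho> w))"
    by (rule peval_sup[OF W]) (use fmult_supp in \<open>auto simp: W_def Sf_Sg_def\<close>)
  also have "\<dots> = (\<Sum>w\<in>W. \<Sum>i\<le>length w. F (w, i))"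
    unfolding fmult_def F_def by (simp add: sc_sumc)
  also have "\<dots> = (\<Sum>(w, i)\<in>Sig. F (w, i))" unfolding Sig_def by (rule sum.Sigma) (use W in auto)
  also have "\<dots> = sum F Sig" by (simp add: case_prod_eta)
  also have "\<dots> = sum F (h ` (Sf \<times> Sg))"
  proof (rule sum.mono_neutral_right)
    show "finite Sig" unfolding Sig_def using W by auto
    show "h ` (Sf \<times> Sg) \<subseteq> Sig" unfolding Sig_def W_def h_def by auto
    show "\<forall>x\<in>Sig - h ` (Sf \<times> Sg). F x = 0"
    proof
      fix x assume x: "x \<in> Sig - h ` (Sf \<times> Sg)"
      obtain w i where xi: "x = (w, i)" by fastforce
      have il: "i \<le> length w" using x xi unfolding Sig_def by auto
      show "F x = 0"
      proof (rule ccontr)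
        assume "F x \<noteq> 0"
        then have "f (take i w) \<noteq> 0" "g (drop i w) \<noteq> 0" unfolding F_def xi by auto
        then have "(take i w, drop i w) \<in> Sf \<times> Sg" unfolding Sf_Sg_def by auto
        moreover have "h (take i w, drop i w) = x" unfolding h_def xi using il by simp
        ultimately show False using x by blast
      qed
    qed
  qed
  also have "\<dots> = sum (F \<circ> h) (Sf \<times> Sg)"
    by (rule sum.reindex) (auto simp: h_def inj_on_def)
  also have "\<dots> = (\<Sum>(u, v)\<in>Sf \<times> Sg. sc (f u) (mon \<rho> u) * sc (g v) (mon \<rho> v))"
    by (rule sum.cong) (auto simp: F_def h_def sc_times)
  also have "\<dots> = (\<Sum>u\<in>Sf. \<Sum>v\<in>Sg. sc (f u) (mon \<rho> u) * sc (g v) (mon \<rho> v))"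
    by (rule sum.cartesian_product[symmetric])
  also have "\<dots> = peval sc \<rho> f * peval sc \<rho> g"
    unfolding peval_def Sf_Sg_def by (simp add: sum_product)
  finally show ?thesis .
qed

lemma A0_sum: "(\<And>i. i \<in> S \<Longrightarrow> f i \<in> A0) \<Longrightarrow> (\<Sum>i\<in>S. f i) \<in> A0"
  by (induction S rule: infinite_finite_induct) (auto simp: A0_0 A0_add)

definition "graded \<rho> \<longleftrightarrow> (\<forall>i. \<rho> (Inl i) \<in> A0) \<and> (\<forall>j. \<rho> (Inr j) \<in> A1)"

lemma zdeg_Nil[simp]: "zdeg [] = 0" unfolding zdeg_def by simp
lemma zdeg_Cons: "zdeg (v # w) = (case v of Inl _ \<Rightarrow> 0 | Inr _ \<Rightarrow> 1) + zdeg w"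
  unfolding zdeg_def by (cases v) auto

lemma mon_par: assumes "graded \<rho>"
  shows "(even (zdeg w) \<longrightarrow> mon \<rho> w \<in> A0) \<and> (odd (zdeg w) \<longrightarrow> mon \<rho> w \<in> A1)"
proof (induction w)
  case Nil then show ?case using one_A0 by simp
next
  case (Cons v w)
  show ?case
  proof (cases v)
    case (Inl i)
    then have "\<rho> v \<in> A0" using assms unfolding graded_def by simp
    then show ?thesis using Cons Inl M00 M01 by (simp add: zdeg_Cons)
  next
    case (Inr j)
    then have "\<rho> v \<in> A1" using assms unfolding graded_def by simp
    then show ?thesis using Cons Inr M10 M11 by (simp add: zdeg_Cons)
  qed
qed

lemma peval_even: assumes "graded \<rho>" "f \<in> fpoly_even" shows "peval sc \<rho> f \<in> A0"
  unfolding peval_def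
proof (rule A0_sum)
  fix w assume "w \<in> supp f"
  then have "even (zdeg w)" using assms(2) unfolding fpoly_even_def by auto
  then show "sc (f w) (mon \<rho> w) \<in> A0" using mon_par[OF assms(1)] A0_sc by blast
qed

lemma A1_sum: "(\<And>i. i \<in> S \<Longrightarrow> f i \<in> A1) \<Longrightarrow> (\<Sum>i\<in>S. f i) \<in> A1"
  by (induction S rule: infinite_finite_induct) (auto simp: A1_0 A1_add)

lemma peval_odd: assumes "graded \<rho>" "f \<in> fpoly_odd" shows "peval sc \<rho> f \<in> A1"
  unfolding peval_def
proof (rule A1_sum)
  fix w assume "w \<in> supp f"
  then have "odd (zdeg w)" using assms(2) unfolding fpoly_odd_def by auto
  then show "sc (f w) (mon \<rho> w) \<in> A1" using mon_par[OF assms(1)] A1_sc by blast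
qed


end

context salg
begin
section \<open>Homomorphisms out of the free algebra\<close>

definition delta :: "var list \<Rightarrow> var list \<Rightarrow> 'k" where
  "delta u = (\<lambda>x. if x = u then 1 else 0)"

lemma delta_fpoly: "delta u \<in> fpoly"
proof -
  have "supp (delta u) \<subseteq> {u}" unfolding delta_def by auto
  then show ?thesis unfolding fpoly_def mem_Collect_eq using finite_subset by blast
qed

lemma fmult_delta: "fmult (delta u) (delta w) = delta (u @ w)"
proof
  fix x
  have "fmult (delta u) (delta w) x = (\<Sum>i\<le>length x. if i = length u then (if take i x = u \<and> drop i x = w then 1 else 0) else 0)"
    unfolding fmult_def
  proof (rule sum.cong)
    fix i assume i: "i \<in> {..length x}"
    show "delta u (take i x) * delta w (drop i x) = (if i = length u then (if take i x = u \<and> drop i x = w then 1 else 0) else 0)"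
      using i by (auto simp: delta_def)
  qed simp
  also have "\<dots> = (if length u \<le> length x then (if take (length u) x = u \<and> drop (length u) x = w then 1 else 0) else 0)"
    by (simp add: sum.delta)
  also have "\<dots> = delta (u @ w) x"
  proof -
    have "(length u \<le> length x \<and> take (length u) x = u \<and> drop (length u) x = w) \<longleftrightarrow> x = u @ w"
    proof
      assume h: "length u \<le> length x \<and> take (length u) x = u \<and> drop (length u) x = w"
      then show "x = u @ w" using append_take_drop_id[of "length u" x] by simp
    qed simp
    then show ?thesis unfolding delta_def by auto
  qed
  finally show "fmult (delta u) (delta w) x = delta (u @ w) x" .
qed

lemma hom_delta:
  fixes Psi :: "(var list \<Rightarrow> 'k) \<Rightarrow> 'a"
  assumes mul: "\<And>u w. Psi (fmult (delta u) (delta w)) = Psi (delta u) * Psi (delta w)"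
  shows "w \<noteq> [] \<Longrightarrow> Psi (delta w) = prod_list (map (\<lambda>v. Psi (delta [v])) w)"
proof (induction w)
  case Nil then show ?case by simp
next
  case (Cons v w)
  show ?case
  proof (cases "w = []")
    case True then show ?thesis by simp
  next
    case False
    have "delta (v # w) = fmult (delta [v]) (delta w)" using fmult_delta[of "[v]" w] by simp
    then have "Psi (delta (v # w)) = Psi (delta [v]) * Psi (delta w)" using mul by simp
    then show ?thesis using Cons False by simp
  qed
qed

lemma hom_expand:
  fixes Psi :: "(var list \<Rightarrow> 'k) \<Rightarrow> 'a"
  assumes add: "\<And>f g. f \<in> fpoly \<Longrightarrow> g \<in> fpoly \<Longrightarrow> Psi (\<lambda>w. f w + g w) = Psi f + Psi g"
    and scl: "\<And>c f. f \<in> fpoly \<Longrightarrow> Psi (\<lambda>w. c * f w) = sc c (Psi f)"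
    and mul: "\<And>f g. f \<in> fpoly \<Longrightarrow> g \<in> fpoly \<Longrightarrow> Psi (fmult f g) = Psi f * Psi g"
    and f: "f \<in> fpoly" "f [] = 0"
  shows "Psi f = (\<Sum>w\<in>supp f. sc (f w) (prod_list (map (\<lambda>v. Psi (delta [v])) w)))"
proof -
  have md: "\<And>u w. Psi (fmult (delta u) (delta w)) = Psi (delta u) * Psi (delta w)"
    using mul delta_fpoly by blast
  have z: "Psi (\<lambda>w. 0) = 0"
  proof -
    have "Psi (\<lambda>w. 0 + 0) = Psi (\<lambda>w. 0) + Psi (\<lambda>w. 0)" by (rule add[OF fpoly_zero fpoly_zero])
    then have "Psi (\<lambda>w. 0) = Psi (\<lambda>w. 0) + Psi (\<lambda>w. 0)" by (simp only: add_0_right)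
    then show ?thesis by (metis add_cancel_left_right)
  qed
  have gen: "finite S \<Longrightarrow> (\<lambda>x. \<Sum>w\<in>S. f w * delta w x) \<in> fpoly \<and>
      Psi (\<lambda>x. \<Sum>w\<in>S. f w * delta w x) = (\<Sum>w\<in>S. sc (f w) (Psi (delta w)))" for S
  proof (induction S rule: finite_induct)
    case empty then show ?case using z fpoly_zero by simp
  next
    case (insert a S)
    have e: "(\<lambda>x. \<Sum>w\<in>insert a S. f w * delta w x) = (\<lambda>x. f a * delta a x + (\<Sum>w\<in>S. f w * delta w x))"
      using insert by simp
    have d: "(\<lambda>x. f a * delta a x) \<in> fpoly" using fpoly_sc[OF delta_fpoly] .
    have IH1: "(\<lambda>x. \<Sum>w\<in>S. f w * delta w x) \<in> fpoly"
      and IH2: "Psi (\<lambda>x. \<Sum>w\<in>S. f w * delta w x) = (\<Sum>w\<in>S. sc (f w) (Psi (delta w)))"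
      using insert.IH by auto
    have "Psi (\<lambda>x. f a * delta a x + (\<Sum>w\<in>S. f w * delta w x))
        = Psi (\<lambda>x. f a * delta a x) + Psi (\<lambda>x. \<Sum>w\<in>S. f w * delta w x)"
      by (rule add[OF d IH1])
    also have "\<dots> = sc (f a) (Psi (delta a)) + (\<Sum>w\<in>S. sc (f w) (Psi (delta w)))"
      by (simp only: IH2 scl[OF delta_fpoly])
    also have "\<dots> = (\<Sum>w\<in>insert a S. sc (f w) (Psi (delta w)))"
      using insert.hyps by simp
    finally show ?case unfolding e using fpoly_add[OF d IH1] by blast
  qed
  have fe: "f = (\<lambda>x. \<Sum>w\<in>supp f. f w * delta w x)"
  proof
    fix x
    have "(\<Sum>w\<in>supp f. f w * delta w x) = (\<Sum>w\<in>supp f. if w = x then f w else 0)"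
      by (rule sum.cong) (auto simp: delta_def)
    also have "\<dots> = f x" using fpoly_fin[OF f(1)] by (simp add: sum.delta')
    finally show "f x = (\<Sum>w\<in>supp f. f w * delta w x)" by (rule sym)
  qed
  have "Psi f = (\<Sum>w\<in>supp f. sc (f w) (Psi (delta w)))"
  proof -
    have "Psi f = Psi (\<lambda>x. \<Sum>w\<in>supp f. f w * delta w x)" using fe by (rule arg_cong)
    then show ?thesis using gen[OF fpoly_fin[OF f(1)]] by (simp only:)
  qed
  also have "\<dots> = (\<Sum>w\<in>supp f. sc (f w) (prod_list (map (\<lambda>v. Psi (delta [v])) w)))"
  proof (rule sum.cong)
    fix w assume "w \<in> supp f"
    then have "w \<noteq> []" using f(2) by auto
    then have "Psi (delta w) = prod_list (map (\<lambda>v. Psi (delta [v])) w)" by (rule hom_delta[of Psi, OF md])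
    then show "sc (f w) (Psi (delta w)) = sc (f w) (prod_list (map (\<lambda>v. Psi (delta [v])) w))"
      by (rule arg_cong)
  qed simp
  finally show ?thesis .
qed

end

context salg
begin

definition evalA :: "'k poly \<Rightarrow> 'a \<Rightarrow> 'a" where
  "evalA p u = foldr (\<lambda>c acc. sc c 1 + u * acc) (coeffs p) 0"

lemma evalA_0[simp]: "evalA 0 u = 0" unfolding evalA_def by simp

lemma evalA_pCons: "evalA (pCons c p) u = sc c 1 + u * evalA p u"
proof (cases "p = 0 \<and> c = 0")
  case True then show ?thesis by simp
next
  case False
  then have "coeffs (pCons c p) = c # coeffs p" by (auto simp: cCons_def)
  then show ?thesis unfolding evalA_def by simp
qed

lemma evalA_add: "evalA (p + q) u = evalA p u + evalA q u"
proof (induction p arbitrary: q)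
  case 0 then show ?case by simp
next
  case (pCons a p)
  obtain b q' where q: "q = pCons b q'" by (cases q) auto
  show ?case unfolding q by (simp add: evalA_pCons pCons.IH sc_addc algebra_simps)
qed

lemma evalA_smult: "evalA (smult c p) u = sc c (evalA p u)"
proof (induction p)
  case 0 then show ?case by simp
next
  case (pCons a p)
  show ?case by (simp add: evalA_pCons pCons.IH sc_add sc_mult sc_mr)
qed

lemma evalA_minus: "evalA (p - q) u = evalA p u - evalA q u"
  using evalA_add[of "p - q" q u] by (simp add: eq_diff_eq)

lemma evalA_mult: "evalA (p * q) u = evalA p u * evalA q u"
proof (induction p)
  case 0 then show ?case by simp
next
  case (pCons a p)
  have "evalA (pCons a p * q) u = sc a (evalA q u) + u * (evalA p u * evalA q u)"
    by (simp add: evalA_add evalA_smult evalA_pCons pCons.IH)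
  also have "\<dots> = (sc a 1 + u * evalA p u) * evalA q u"
    by (simp add: distrib_right mult.assoc sc_l1[of a "evalA q u"])
  finally show ?case by (simp add: evalA_pCons)
qed

lemma evalA_const: "evalA [:c:] u = sc c 1" by (simp add: evalA_pCons)

lemma evalA_lin: "evalA [:s, 1:] u = sc s 1 + u" by (simp add: evalA_pCons)

lemma evalA_pcompose: "evalA (pcompose p q) u = evalA p (evalA q u)"
proof (induction p)
  case 0 then show ?case by simp
next
  case (pCons a p)
  show ?case by (simp add: pcompose_pCons evalA_add evalA_mult evalA_const evalA_pCons pCons.IH)
qed

lemma evalA_monom: "evalA (monom c k) u = sc c (u ^ k)"
proof (induction k)
  case 0 then show ?case by (simp add: monom_0 evalA_const)
next
  case (Suc k)
  show ?case by (simp add: monom_Suc evalA_pCons Suc.IH sc_mr)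
qed

lemma evalA_sum: "evalA (\<Sum>i\<in>S. p i) u = (\<Sum>i\<in>S. evalA (p i) u)"
  by (induction S rule: infinite_finite_induct) (auto simp: evalA_add)

definition "Mset a = {p. \<forall>s. evalA p (sc s 1 + a) \<in> alg_center}"

lemma M_diff: "p \<in> Mset a \<Longrightarrow> q \<in> Mset a \<Longrightarrow> p - q \<in> Mset a"
  unfolding Mset_def by (auto simp: evalA_minus center_diff)
lemma M_smult: "p \<in> Mset a \<Longrightarrow> smult c p \<in> Mset a"
  unfolding Mset_def by (auto simp: evalA_smult center_sc)
lemma M_const: "[:c:] \<in> Mset a"
  unfolding Mset_def by (auto simp: evalA_const sc1_center)
lemma M_shift: assumes "p \<in> Mset a" shows "pcompose p [:t, 1:] \<in> Mset a"
  unfolding Mset_def mem_Collect_eq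
proof
  fix s
  have "evalA (pcompose p [:t, 1:]) (sc s 1 + a) = evalA p (sc (t + s) 1 + a)"
    by (simp add: evalA_pcompose evalA_lin sc_addc add.assoc)
  then show "evalA (pcompose p [:t, 1:]) (sc s 1 + a) \<in> alg_center"
    using assms unfolding Mset_def by simp
qed

lemma M_x: assumes "a \<notin> alg_center" shows "[:0, 1:] \<notin> Mset a"
proof
  assume "[:0, 1:] \<in> Mset a"
  then have "evalA [:0, 1:] (sc 0 1 + a) \<in> alg_center" unfolding Mset_def by blast
  then show False using assms by (simp add: evalA_lin)
qed

lemma M_deg_aux:
  assumes a: "a \<notin> alg_center"
  shows "\<forall>p. degree p = d \<longrightarrow> p \<in> Mset a \<longrightarrow> degree p = 0"
proof (induction d rule: less_induct)
  case (less d)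
  show ?case
  proof (intro allI impI)
    fix p :: "'k poly"
    assume dp: "degree p = d" and pM: "p \<in> Mset a"
    show "degree p = 0"
    proof (rule ccontr)
      assume d0: "degree p \<noteq> 0"
      define D where "D = pcompose p [:1, 1:] - p"
      have DM: "D \<in> Mset a" unfolding D_def by (intro M_diff M_shift pM)
      have degc: "degree (pcompose p [:1, 1:]) = d" using dp by (simp add: degree_pcompose)
      have lc: "coeff (pcompose p [:1, 1:]) d = coeff p d"
        using lead_coeff_comp[of "[:1, 1:]" p] degc dp by simp
      have "\<forall>i>d - 1. coeff D i = 0"
      proof (intro allI impI)
        fix i assume i: "i > d - 1"
        show "coeff D i = 0"
        proof (cases "i = d")
          case True then show ?thesis unfolding D_def using lc by simp
        next
          case False
          then have "i > d" using i by simp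
          then show ?thesis unfolding D_def using degc dp by (simp add: coeff_eq_0)
        qed
      qed
      then have "degree D \<le> d - 1" by (rule degree_le)
      then have "degree D < d" using d0 dp by simp
      then have "degree D = 0" using less.IH DM by blast
      then have De: "D = [:coeff D 0:]" using degree_0_id by metis
      define c where "c = coeff D 0"
      have step: "poly p (1 + x) = poly p x + c" for x
      proof -
        have "poly D x = c" using De unfolding c_def by (metis poly_pCons poly_0 mult_zero_right add_0_right)
        moreover have "poly D x = poly p (1 + x) - poly p x"
          unfolding D_def by (simp add: poly_pcompose)
        ultimately have "poly p (1 + x) - poly p x = c" by simp
        then show ?thesis by (simp add: diff_eq_eq add.commute)
      qed
      have nat: "poly p (of_nat n) = poly p 0 + of_nat n * c" for n
      proof (induction n)
        case 0 then show ?case by simp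
      next
        case (Suc n)
        have "poly p (of_nat (Suc n)) = poly p (1 + of_nat n)" by simp
        also have "\<dots> = poly p (of_nat n) + c" by (rule step)
        also have "\<dots> = poly p 0 + of_nat (Suc n) * c" using Suc.IH by (simp add: algebra_simps)
        finally show ?case .
      qed
      define g where "g = p - [:poly p 0, c:]"
      have groot: "poly g (of_nat n) = 0" for n unfolding g_def using nat[of n] by (simp add: algebra_simps)
      have "g = 0"
      proof (rule ccontr)
        assume "g \<noteq> 0"
        then have "finite {x. poly g x = 0}" by (rule poly_roots_finite)
        moreover have "range (of_nat :: nat \<Rightarrow> 'k) \<subseteq> {x. poly g x = 0}" using groot by auto
        moreover have "infinite (range (of_nat :: nat \<Rightarrow> 'k))"
          by (rule range_inj_infinite) (rule inj_of_nat)
        ultimately show False using finite_subset by blast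
      qed
      then have pe: "p = [:poly p 0, c:]" unfolding g_def by simp
      have c0: "c \<noteq> 0"
      proof
        assume "c = 0"
        then have "degree p = 0" using pe by (metis degree_pCons_0 pCons_0_0)
        then show False using d0 by simp
      qed
      have "smult (1 / c) (p - [:poly p 0:]) \<in> Mset a" by (intro M_smult M_diff pM M_const)
      moreover have "smult (1 / c) (p - [:poly p 0:]) = [:0, 1:]"
      proof -
        have "p - [:poly p 0:] = [:0, c:]" by (subst pe) simp
        then show ?thesis using c0 by simp
      qed
      ultimately show False using M_x[OF a] by simp
    qed
  qed
qed

lemma M_deg: "a \<notin> alg_center \<Longrightarrow> p \<in> Mset a \<Longrightarrow> degree p = 0"
  using M_deg_aux by blast

lemma mon_sc: "prod_list (map (\<lambda>v. sc (l v) u) w) = sc (prod_list (map l w)) (u ^ length w)"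
  by (induction w) (auto simp: sc_times)

lemma Cgr_J:
  assumes a0: "a \<in> A0" "a \<notin> alg_center" and f: "f \<in> Cgr sc A0 A1" and rho: "graded \<rho>"
  shows "peval sc \<rho> f \<in> jacobson"
proof -
  have fp: "f \<in> fpoly" and f0: "f [] = 0"
    and cen: "\<And>\<rho>. graded \<rho> \<Longrightarrow> peval sc \<rho> f \<in> alg_center"
    using f unfolding Cgr_def graded_def by auto
  define l where "l = (\<lambda>v. spt (\<rho> v))"
  have l1: "l (Inr j) = 0" for j using rho spt_A1 unfolding l_def graded_def by simp
  define S where "S = supp f"
  have S: "finite S" using fp fpoly_fin unfolding S_def by blast
  have Sne: "w \<in> S \<Longrightarrow> w \<noteq> []" for w using f0 unfolding S_def by auto
  define r where "r = (\<Sum>w\<in>S. monom (f w * prod_list (map l w)) (length w))"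
  have rM: "r \<in> Mset a" unfolding Mset_def mem_Collect_eq
  proof
    fix s
    define u where "u = sc s 1 + a"
    have u: "u \<in> A0" unfolding u_def using A0_add[OF sc1_A0 a0(1)] .
    define rs where "rs = (\<lambda>v. sc (l v) u)"
    have grs: "graded rs" unfolding graded_def rs_def using u A0_sc l1 A1_0 by simp
    have "peval sc rs f = (\<Sum>w\<in>S. sc (f w) (prod_list (map rs w)))" unfolding peval_def S_def ..
    also have "\<dots> = (\<Sum>w\<in>S. evalA (monom (f w * prod_list (map l w)) (length w)) u)"
      unfolding rs_def by (rule sum.cong) (simp_all add: mon_sc evalA_monom sc_mult)
    also have "\<dots> = evalA r u" unfolding r_def by (simp add: evalA_sum)
    finally show "evalA r (sc s 1 + a) \<in> alg_center" using cen[OF grs] unfolding u_def by simp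
  qed
  have "degree r = 0" by (rule M_deg[OF a0(2) rM])
  then have re: "r = [:coeff r 0:]" using degree_0_id by metis
  have "coeff r 0 = (\<Sum>w\<in>S. if length w = 0 then f w * prod_list (map l w) else 0)"
    unfolding r_def coeff_sum by (rule sum.cong) auto
  also have "\<dots> = 0" using Sne by (intro sum.neutral) auto
  finally have r0: "r = 0" using re by simp
  have "spt (peval sc \<rho> f) = (\<Sum>w\<in>S. f w * prod_list (map l w))"
    unfolding peval_def S_def l_def by (simp add: spt_sum spt_sc spt_prod_list)
  also have "\<dots> = poly r 1" unfolding r_def by (simp add: poly_sum poly_monom)
  also have "\<dots> = 0" using r0 by simp
  finally have "spt (peval sc \<rho> f) = 0" .
  then show ?thesis using spt_spec[of "peval sc \<rho> f"] by simp
qed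

end


context salg
begin

lemma delta_even: "delta [Inl i] \<in> fpoly_even"
  unfolding fpoly_even_def using delta_fpoly by (auto simp: delta_def zdeg_def)

lemma delta_odd: "delta [Inr j] \<in> fpoly_odd"
  unfolding fpoly_odd_def using delta_fpoly by (auto simp: delta_def zdeg_def)

lemma Cgr_iff: "f \<in> Cgr sc A0 A1 \<longleftrightarrow> f \<in> fpoly \<and> f [] = 0 \<and> (\<forall>\<rho>. graded \<rho> \<longrightarrow> peval sc \<rho> f \<in> alg_center)"
  unfolding Cgr_def graded_def by auto

lemma endo_closed:
  assumes a0: "a \<in> A0" "a \<notin> alg_center" and phi: "graded_endo \<phi>" and f: "f \<in> Cgr sc A0 A1"
  shows "\<phi> f \<in> Cgr sc A0 A1"
proof -
  have fp: "f \<in> fpoly" and f0: "f [] = 0" and cen: "\<And>\<rho>. graded \<rho> \<Longrightarrow> peval sc \<rho> f \<in> alg_center"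
    using f unfolding Cgr_iff by auto
  have pfp: "\<And>g. g \<in> fpoly \<Longrightarrow> \<phi> g \<in> fpoly"
    and padd: "\<And>g h. g \<in> fpoly \<Longrightarrow> h \<in> fpoly \<Longrightarrow> \<phi> (\<lambda>w. g w + h w) = (\<lambda>w. \<phi> g w + \<phi> h w)"
    and pscl: "\<And>c g. g \<in> fpoly \<Longrightarrow> \<phi> (\<lambda>w. c * g w) = (\<lambda>w. c * \<phi> g w)"
    and pmul: "\<And>g h. g \<in> fpoly \<Longrightarrow> h \<in> fpoly \<Longrightarrow> \<phi> (fmult g h) = fmult (\<phi> g) (\<phi> h)"
    and pev: "\<phi> ` fpoly_even \<subseteq> fpoly_even" and pod: "\<phi> ` fpoly_odd \<subseteq> fpoly_odd"
    using phi unfolding graded_endo_def by auto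
  have ev: "\<phi> (delta [Inl i]) \<in> fpoly_even" for i using pev delta_even by blast
  have od: "\<phi> (delta [Inr j]) \<in> fpoly_odd" for j using pod delta_odd by blast
  have val: "peval sc \<rho> (\<phi> f) \<in> alg_center" if gr: "graded \<rho>" for \<rho>
  proof -
    define r' where "r' = (\<lambda>v. peval sc \<rho> (\<phi> (delta [v])))"
    have "peval sc \<rho> (\<phi> f) = (\<Sum>w\<in>supp f. sc (f w) (prod_list (map (\<lambda>v. peval sc \<rho> (\<phi> (delta [v]))) w)))"
    proof (rule hom_expand[where Psi = "\<lambda>g. peval sc \<rho> (\<phi> g)", OF _ _ _ fp f0])
      fix g h :: "var list \<Rightarrow> 'k" assume "g \<in> fpoly" "h \<in> fpoly"
      then show "peval sc \<rho> (\<phi> (\<lambda>w. g w + h w)) = peval sc \<rho> (\<phi> g) + peval sc \<rho> (\<phi> h)"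
        using padd peval_add pfp by simp
    next
      fix c and g :: "var list \<Rightarrow> 'k" assume "g \<in> fpoly"
      then show "peval sc \<rho> (\<phi> (\<lambda>w. c * g w)) = sc c (peval sc \<rho> (\<phi> g))"
        using pscl peval_scal by simp
    next
      fix g h :: "var list \<Rightarrow> 'k" assume "g \<in> fpoly" "h \<in> fpoly"
      then show "peval sc \<rho> (\<phi> (fmult g h)) = peval sc \<rho> (\<phi> g) * peval sc \<rho> (\<phi> h)"
        using pmul peval_fmult pfp by simp
    qed
    also have "\<dots> = peval sc r' f" unfolding peval_def r'_def ..
    finally have e: "peval sc \<rho> (\<phi> f) = peval sc r' f" .
    have "graded r'" unfolding graded_def r'_def using peval_even[OF gr ev] peval_odd[OF gr od] by blast
    then show ?thesis using e cen by simp
  qed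
  define r'' where "r'' = (\<lambda>v. sc (\<phi> (delta [v]) []) (1::'a))"
  have "sc (\<phi> f []) (1::'a) = (\<Sum>w\<in>supp f. sc (f w) (prod_list (map (\<lambda>v. sc (\<phi> (delta [v]) []) (1::'a)) w)))"
  proof (rule hom_expand[where Psi = "\<lambda>g. sc (\<phi> g []) 1", OF _ _ _ fp f0])
    fix g h :: "var list \<Rightarrow> 'k" assume "g \<in> fpoly" "h \<in> fpoly"
    then show "sc (\<phi> (\<lambda>w. g w + h w) []) 1 = sc (\<phi> g []) 1 + sc (\<phi> h []) 1"
      using padd by (simp add: sc_addc)
  next
    fix c and g :: "var list \<Rightarrow> 'k" assume "g \<in> fpoly"
    then show "sc (\<phi> (\<lambda>w. c * g w) []) 1 = sc c (sc (\<phi> g []) 1)"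
      using pscl by (simp add: sc_mult)
  next
    fix g h :: "var list \<Rightarrow> 'k" assume "g \<in> fpoly" "h \<in> fpoly"
    then show "sc (\<phi> (fmult g h) []) 1 = sc (\<phi> g []) 1 * sc (\<phi> h []) 1"
      using pmul by (simp add: fmult_Nil sc_times)
  qed
  also have "\<dots> = peval sc r'' f" unfolding peval_def r''_def ..
  finally have e2: "sc (\<phi> f []) (1::'a) = peval sc r'' f" .
  have "graded r''" unfolding graded_def r''_def
  proof (intro conjI allI)
    fix i show "sc (\<phi> (delta [Inl i]) []) 1 \<in> A0" by (rule sc1_A0)
  next
    fix j have "\<phi> (delta [Inr j]) [] = 0" using od[of j] unfolding fpoly_odd_def by auto
    then show "sc (\<phi> (delta [Inr j]) []) 1 \<in> A1" using A1_0 by simp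
  qed
  then have "peval sc r'' f \<in> jacobson \<inter> alg_center" using Cgr_J[OF a0 f] cen by blast
  then have "sc (\<phi> f []) (1::'a) \<in> jacobson" using e2 by simp
  then have sc0: "sc (\<phi> f []) (1::'a) = 0" by (rule sc1_J)
  have "\<phi> f [] = 0"
  proof (rule ccontr)
    assume c: "\<phi> f [] \<noteq> 0"
    have "(1::'a) = sc (1 / \<phi> f []) (sc (\<phi> f []) 1)" using c by (simp add: sc_mult[symmetric])
    then have one: "(1::'a) = 0" using sc0 by simp
    have "a = a * 1" by simp
    then have "a = 0" using one by simp
    then show False using a0(2) unfolding alg_center_def by simp
  qed
  then show ?thesis unfolding Cgr_iff using pfp[OF fp] val by blast
qed

end

theorem proposition2p2:
  fixes sc :: "'k::field_char_0 \<Rightarrow> 'a::ring_1 \<Rightarrow> 'a"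
    and A0 A1 :: "'a set"
  assumes super: "superalgebra sc A0 A1"
    and decomp: "\<forall>a. \<exists>!c. a - sc c 1 \<in> jacobson"
    and noncentral: "\<not> A0 \<subseteq> alg_center"
  shows "alg_center = {sc c 1 + j | c j. j \<in> jacobson \<inter> alg_center}
         \<and> (\<forall>c. sc c 1 \<in> jacobson \<inter> alg_center \<longrightarrow> sc c 1 = 0)
         \<and> (graded_ideal sc A0 A1 (jacobson \<inter> alg_center) \<longrightarrow> T2_ideal (Cgr sc A0 A1))"
proof -
  interpret S: salg sc A0 A1 by (rule salg.intro[OF super decomp])
  obtain a where a0: "a \<in> A0" "a \<notin> alg_center" using noncentral by blast
  have P1: "alg_center = {sc c 1 + j | c j. j \<in> jacobson \<inter> alg_center}"
  proof (intro equalityI subsetI)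
    fix z :: 'a assume z: "z \<in> alg_center"
    define j where "j = z - sc (S.spt z) 1"
    have "j \<in> jacobson" unfolding j_def by (rule S.spt_spec)
    moreover have "j \<in> alg_center" unfolding j_def using S.center_diff[OF z S.sc1_center] .
    moreover have "z = sc (S.spt z) 1 + j" unfolding j_def by simp
    ultimately show "z \<in> {sc c 1 + j | c j. j \<in> jacobson \<inter> alg_center}" by blast
  next
    fix z :: 'a assume "z \<in> {sc c 1 + j | c j. j \<in> jacobson \<inter> alg_center}"
    then show "z \<in> alg_center" using S.center_add S.sc1_center by blast
  qed
  have P2: "\<forall>c. sc c 1 \<in> jacobson \<inter> alg_center \<longrightarrow> sc c 1 = 0" using S.sc1_J by blast
  have P3: "T2_ideal (Cgr sc A0 A1)" if gi: "graded_ideal sc A0 A1 (jacobson \<inter> alg_center)"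
  proof -
    have idl: "\<And>(x::'a) b. x \<in> jacobson \<inter> alg_center \<Longrightarrow> b * x \<in> jacobson \<inter> alg_center \<and> x * b \<in> jacobson \<inter> alg_center"
    proof -
      have "\<forall>x::'a\<in>jacobson \<inter> alg_center. \<forall>a. a * x \<in> jacobson \<inter> alg_center \<and> x * a \<in> jacobson \<inter> alg_center"
      proof -
        have "alg_ideal sc (jacobson \<inter> alg_center)" using gi unfolding graded_ideal_def by (rule conjunct1)
        then show ?thesis unfolding alg_ideal_def by (rule conjunct2)
      qed
      then show "\<And>(x::'a) b. x \<in> jacobson \<inter> alg_center \<Longrightarrow> b * x \<in> jacobson \<inter> alg_center \<and> x * b \<in> jacobson \<inter> alg_center"
        by blast
    qed
    have key: "\<And>f \<rho>. f \<in> Cgr sc A0 A1 \<Longrightarrow> S.graded \<rho> \<Longrightarrow> peval sc \<rho> f \<in> jacobson \<inter> alg_center"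
      using S.Cgr_J[OF a0] S.Cgr_iff by blast
    have mulc: "fmult g f \<in> Cgr sc A0 A1 \<and> fmult f g \<in> Cgr sc A0 A1"
      if f: "f \<in> Cgr sc A0 A1" and g: "g \<in> fpoly" for f g :: "var list \<Rightarrow> 'k"
    proof -
      have fp: "f \<in> fpoly" and f0: "f [] = 0" using f unfolding S.Cgr_iff by auto
      have v1: "peval sc \<rho> (fmult g f) \<in> alg_center" if "S.graded \<rho>" for \<rho>
        using S.peval_fmult[OF g fp] idl[OF key[OF f that]] by simp
      have v2: "peval sc \<rho> (fmult f g) \<in> alg_center" if "S.graded \<rho>" for \<rho>
        using S.peval_fmult[OF fp g] idl[OF key[OF f that]] by simp
      show "fmult g f \<in> Cgr sc A0 A1 \<and> fmult f g \<in> Cgr sc A0 A1" unfolding S.Cgr_iff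
        using S.fpoly_fmult[OF g fp] S.fpoly_fmult[OF fp g] v1 v2 f0 by (simp add: S.fmult_Nil)
    qed
    have I: "fpoly_ideal (Cgr sc A0 A1)"
      unfolding fpoly_ideal_def
    proof (intro conjI ballI allI)
      show "Cgr sc A0 A1 \<subseteq> fpoly" unfolding Cgr_def by blast
      show "(\<lambda>_. 0) \<in> Cgr sc A0 A1"
      proof -
        have "(0::'a) \<in> alg_center" unfolding alg_center_def by simp
        then show ?thesis unfolding S.Cgr_iff using S.fpoly_zero S.peval_zero by simp
      qed
    next
      fix f g :: "var list \<Rightarrow> 'k" assume f: "f \<in> Cgr sc A0 A1" and g: "g \<in> Cgr sc A0 A1"
      then show "(\<lambda>w. f w + g w) \<in> Cgr sc A0 A1" unfolding S.Cgr_iff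
        using S.fpoly_add S.peval_add S.center_add by simp
    next
      fix c and f :: "var list \<Rightarrow> 'k" assume f: "f \<in> Cgr sc A0 A1"
      then show "(\<lambda>w. c * f w) \<in> Cgr sc A0 A1" unfolding S.Cgr_iff
        using S.fpoly_sc S.peval_scal S.center_sc by simp
    next
      fix f g :: "var list \<Rightarrow> 'k" assume f: "f \<in> Cgr sc A0 A1" and g: "g \<in> fpoly"
      show "fmult g f \<in> Cgr sc A0 A1" using mulc[OF f g] by blast
    next
      fix f g :: "var list \<Rightarrow> 'k" assume f: "f \<in> Cgr sc A0 A1" and g: "g \<in> fpoly"
      show "fmult f g \<in> Cgr sc A0 A1" using mulc[OF f g] by blast
    qed
    show ?thesis unfolding T2_ideal_def
      using I S.endo_closed[OF a0] by blast
  qed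
  show ?thesis using P1 P2 P3 by blast
qed

end
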